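(* Let $\ell \geq 1$ be an integer and let $H_\ell$ be the graph defined in the context. Then every path in $H_\ell$ has length (number of edges) at most $2\ell^2+4\ell+7$.
   Context: For an integer $\ell\ge 1$, $H_\ell$ is the graph with vertex set $V_\ell=\{v_{h,j} : h\in\{-\ell,\dots,\ell\},\ j\in\{1,\dots,2^{\ell-|h|}\}\}$ and with the following edges: (1) $v_{h,j}v_{h-1,2j-1}$ and $v_{h,j}v_{h-1,2j}$ for every $h\in\{1,\dots,\ell\}$ and $j\in\{1,\dots,2^{\ell-h}\}$; (2) $v_{h,j}v_{h+1,2j-1}$ and $v_{h,j}v_{h+1,2j}$ for every $h\in\{-\ell,\dots,-1\}$ and $j\in\{1,\dots,2^{\ell-|h|}\}$; (3) the edge $v_{\ell,1}v_{-\ell,1}$; (4) the edges $v_{0,2j-1}v_{0,2j}$ for every $j\in\{1,\dots,2^{\ell-1}\}$. Thus $H_\ell$ consists of two complete binary trees of height $\ell$ (rooted at $v_{\ell,1}$ and $v_{-\ell,1}$) whose leaves $v_{0,j}$ are identified, plus an edge between the roots and a perfect matching on consecutive leaves. *)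

theory Defs
  imports Main
begin

text \<open>Vertex v_{h,j} of H_l is represented by the pair (h, j) :: int \<times> nat.\<close>

definition H_vert :: "nat \<Rightarrow> (int \<times> nat) set" where
  "H_vert l = {(h, j). - int l \<le> h \<and> h \<le> int l \<and> 1 \<le> j \<and> j \<le> 2 ^ (l - nat \<bar>h\<bar>)}"

text \<open>Directed generating edges (1)-(4); the graph is their symmetric closure.\<close>
definition H_arc :: "nat \<Rightarrow> int \<times> nat \<Rightarrow> int \<times> nat \<Rightarrow> bool" where
  "H_arc l u v \<longleftrightarrow>
     (\<exists>h j. 1 \<le> h \<and> h \<le> int l \<and> 1 \<le> j \<and> j \<le> 2 ^ (l - nat h) \<and> u = (h, j) \<and>
            (v = (h - 1, 2 * j - 1) \<or> v = (h - 1, 2 * j))) \<or>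
     (\<exists>h j. - int l \<le> h \<and> h \<le> -1 \<and> 1 \<le> j \<and> j \<le> 2 ^ (l - nat \<bar>h\<bar>) \<and> u = (h, j) \<and>
            (v = (h + 1, 2 * j - 1) \<or> v = (h + 1, 2 * j))) \<or>
     (u = (int l, 1) \<and> v = (- int l, 1)) \<or>
     (\<exists>j. 1 \<le> j \<and> j \<le> 2 ^ (l - 1) \<and> u = (0, 2 * j - 1) \<and> v = (0, 2 * j))"

definition H_adj :: "nat \<Rightarrow> int \<times> nat \<Rightarrow> int \<times> nat \<Rightarrow> bool" where
  "H_adj l u v \<longleftrightarrow> H_arc l u v \<or> H_arc l v u"

text \<open>A path is a nonempty list of pairwise distinct vertices, consecutive ones adjacent.
  Its length is the number of edges, i.e. length of the list minus one.\<close>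
definition H_path :: "nat \<Rightarrow> (int \<times> nat) list \<Rightarrow> bool" where
  "H_path l p \<longleftrightarrow> p \<noteq> [] \<and> distinct p \<and> set p \<subseteq> H_vert l \<and>
     (\<forall>i. Suc i < length p \<longrightarrow> H_adj l (p ! i) (p ! Suc i))"

end

theory Submission imports Defs begin

definition blk :: "nat \<Rightarrow> nat \<Rightarrow> (int \<times> nat) set" where
  "blk h j = {(k,i). \<bar>k\<bar> \<le> int h \<and> 1 \<le> i \<and> (i - 1) div 2 ^ (h - nat \<bar>k\<bar>) = j - 1}"

lemma mem_blk: "(k,i) \<in> blk h j \<longleftrightarrow> \<bar>k\<bar> \<le> int h \<and> 1 \<le> i \<and> (i - 1) div 2 ^ (h - nat \<bar>k\<bar>) = j - 1"
  by (simp add: blk_def)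

lemma div2a: "(2*x) div 2^(Suc n) = (x::nat) div 2^n"
  by (simp add: div_mult2_eq)

lemma div2b: "(2*x+1) div 2^(Suc n) = (x::nat) div 2^n"
  by (simp add: div_mult2_eq)

lemma child_eq:
  fixes c j' n g :: nat
  assumes "1 \<le> n" "n \<le> g" "1 \<le> j'" "c = 2*j' - 1 \<or> c = 2*j'"
  shows "(c - 1) div 2^(g - (n - 1)) = (j' - 1) div 2^(g - n)"
proof -
  have e: "g - (n - 1) = Suc (g - n)" using assms by simp
  from assms(4) show ?thesis
  proof
    assume "c = 2*j' - 1"
    then have "c - 1 = 2*(j'-1)" using assms by simp
    then show ?thesis using e div2a by simp
  next
    assume "c = 2*j'"
    then have "c - 1 = 2*(j'-1) + 1" using assms by simp
    then show ?thesis using e div2b by simp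
  qed
qed

lemma arc_cases:
  assumes "H_arc l u v"
  shows "(\<exists>n j'. 1 \<le> n \<and> n \<le> l \<and> 1 \<le> j' \<and> u = (int n, j') \<and> (v = (int n - 1, 2*j'-1) \<or> v = (int n - 1, 2*j'))) \<or>
         (\<exists>n j'. 1 \<le> n \<and> n \<le> l \<and> 1 \<le> j' \<and> u = (- int n, j') \<and> (v = (- int n + 1, 2*j'-1) \<or> v = (- int n + 1, 2*j'))) \<or>
         (u = (int l, 1) \<and> v = (- int l, 1)) \<or>
         (\<exists>j'. 1 \<le> j' \<and> u = (0, 2*j'-1) \<and> v = (0, 2*j'))"
proof -
  from assms consider
    (a) h j where "1 \<le> h" "h \<le> int l" "1 \<le> j" "u = (h, j)" "v = (h - 1, 2 * j - 1) \<or> v = (h - 1, 2 * j)"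
  | (b) h j where "- int l \<le> h" "h \<le> -1" "1 \<le> j" "u = (h, j)" "v = (h + 1, 2 * j - 1) \<or> v = (h + 1, 2 * j)"
  | (c) "u = (int l, 1) \<and> v = (- int l, 1)"
  | (d) "\<exists>j. 1 \<le> j \<and> u = (0, 2 * j - 1) \<and> v = (0, 2 * j)"
    unfolding H_arc_def by blast
  then show ?thesis
  proof cases
    case (a h j)
    then obtain n where "h = int n" by (metis nonneg_int_cases order_trans zero_le_one)
    with a show ?thesis by (intro disjI1 exI[of _ n] exI[of _ j]) auto
  next
    case (b h j)
    then obtain n where "h = - int n" by (metis minus_minus neg_0_le_iff_le nonneg_int_cases order_trans zero_le_one neg_le_iff_le)
    with b show ?thesis by (intro disjI2 disjI1 exI[of _ n] exI[of _ j]) auto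
  qed auto
qed


lemma abs_aux: "1 \<le> n \<Longrightarrow> \<bar>int n - 1\<bar> = int (n - 1) \<and> \<bar>- int n + 1\<bar> = int (n - 1)"
  by auto

lemma down_closed:
  fixes n j' c g j :: nat
  assumes "1 \<le> n" "1 \<le> j'" "c = 2*j' - 1 \<or> c = 2*j'"
    and "(s * int n, j') \<in> blk g j" "s = 1 \<or> s = -1"
  shows "(s * int n - s, c) \<in> blk g j"
proof -
  have n: "n \<le> g" and q: "(j' - 1) div 2^(g - n) = j - 1"
    using assms(4,5) by (auto simp: mem_blk)
  have a: "\<bar>s * int n - s\<bar> = int (n - 1)" using assms(1,5) by auto
  have "(c - 1) div 2^(g - (n - 1)) = (j' - 1) div 2^(g - n)"
    using child_eq[OF assms(1) n assms(2,3)] .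
  moreover have "n - 1 \<le> g" "1 \<le> c" using n assms(2,3) by auto
  ultimately show ?thesis using a q by (simp add: mem_blk)
qed

lemma up_closed:
  fixes n j' c g j :: nat
  assumes "1 \<le> n" "n \<le> g" "1 \<le> j'" "c = 2*j' - 1 \<or> c = 2*j'"
    and "(s * int n - s, c) \<in> blk g j" "s = 1 \<or> s = -1"
  shows "(s * int n, j') \<in> blk g j"
proof -
  have a: "\<bar>s * int n - s\<bar> = int (n - 1)" using assms(1,6) by auto
  have q: "(c - 1) div 2^(g - (n - 1)) = j - 1"
    using assms(5) a by (auto simp: mem_blk)
  have "(c - 1) div 2^(g - (n - 1)) = (j' - 1) div 2^(g - n)"
    using child_eq[OF assms(1,2,3,4)] .
  then show ?thesis using q assms(2,3,6) by (auto simp: mem_blk)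
qed


lemma leaf_pair:
  assumes "1 \<le> g" "1 \<le> j'"
  shows "(0::int, 2*j'-1) \<in> blk g j \<longleftrightarrow> (0::int, 2*j') \<in> blk g j"
proof -
  have "(2*j'-1 - 1) div 2^(g - (1 - 1)) = (j' - 1) div 2^(g - 1)"
    by (rule child_eq) (use assms in auto)
  moreover have "(2*j' - 1) div 2^(g - (1 - 1)) = (j' - 1) div 2^(g - 1)"
    using child_eq[of 1 g j' "2*j'"] assms by auto
  moreover have "1 \<le> 2*j'-1" using assms by simp
  ultimately show ?thesis using assms by (simp add: mem_blk)
qed

lemma arc_casesE:
  assumes "H_arc l u v"
  obtains (up) n j' c where "1 \<le> n" "n \<le> l" "1 \<le> j'" "c = 2*j'-1 \<or> c = 2*j'" "u = (int n, j')" "v = (int n - 1, c)"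
  | (down) n j' c where "1 \<le> n" "n \<le> l" "1 \<le> j'" "c = 2*j'-1 \<or> c = 2*j'" "u = (- int n, j')" "v = (- int n + 1, c)"
  | (root) "u = (int l, 1)" "v = (- int l, 1)"
  | (leaf) j' where "1 \<le> j'" "u = (0, 2*j'-1)" "v = (0, 2*j')"
  using arc_cases[OF assms] by blast

lemma exit_blk:
  assumes g: "1 \<le> g" "g < l" and j: "1 \<le> j" and v: "v \<in> blk g j" and w: "w \<notin> blk g j"
    and adj: "H_adj l v w"
  shows "(v = (int g, j) \<and> w = (int g + 1, (j+1) div 2)) \<or> (v = (- int g, j) \<and> w = (- int g - 1, (j+1) div 2))"
proof -
  have fw: False if "H_arc l v w"
    using that
  proof (cases rule: arc_casesE)
    case (up n j' c)
    have "(1 * int n, j') \<in> blk g j" using v up by simp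
    from down_closed[OF up(1,3,4) this] have "w \<in> blk g j" using up by simp
    then show False using w by simp
  next
    case (down n j' c)
    have "((-1) * int n, j') \<in> blk g j" using v down by simp
    from down_closed[OF down(1,3,4) this] have "w \<in> blk g j" using down by simp
    then show False using w by simp
  next
    case root then show False using v g by (simp add: mem_blk)
  next
    case (leaf j')
    then show False using leaf_pair[of g j' j] v w g by simp
  qed
  have bw: ?thesis if "H_arc l w v"
    using that
  proof (cases rule: arc_casesE)
    case (up n j' c)
    show ?thesis
    proof (cases "n \<le> g")
      case True
      from up_closed[OF up(1) True up(3,4), of 1] have "w \<in> blk g j" using v up by simp
      then show ?thesis using w by simp
    next
      case False
      have vv: "\<bar>int n - 1\<bar> \<le> int g" "(c - 1) div 2 ^ (g - nat \<bar>int n - 1\<bar>) = j - 1" "1 \<le> c"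
        using v up by (auto simp: mem_blk)
      then have ng: "n = g + 1" using False by auto
      then have "c - 1 = j - 1" using vv by simp
      then have "c = j" using vv j by simp
      then have "j' = (j+1) div 2" using up by auto
      then show ?thesis using ng up \<open>c = j\<close> by simp
    qed
  next
    case (down n j' c)
    show ?thesis
    proof (cases "n \<le> g")
      case True
      from up_closed[OF down(1) True down(3,4), of "-1"] have "w \<in> blk g j" using v down by simp
      then show ?thesis using w by simp
    next
      case False
      have vv: "\<bar>- int n + 1\<bar> \<le> int g" "(c - 1) div 2 ^ (g - nat \<bar>- int n + 1\<bar>) = j - 1" "1 \<le> c"
        using v down by (auto simp: mem_blk)
      then have ng: "n = g + 1" using False by auto
      then have "c - 1 = j - 1" using vv by simp
      then have "c = j" using vv j by simp
      then have "j' = (j+1) div 2" using down by auto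
      then show ?thesis using ng down \<open>c = j\<close> by simp
    qed
  next
    case root then show ?thesis using v g by (simp add: mem_blk)
  next
    case (leaf j')
    then show ?thesis using leaf_pair[of g j' j] v w g by simp
  qed
  from adj show ?thesis unfolding H_adj_def using fw bw by blast
qed


lemma H_adj_sym: "H_adj l u v \<Longrightarrow> H_adj l v u"
  unfolding H_adj_def by blast

lemma through:
  assumes path: "H_path l p" and g: "1 \<le> g" "g < l" "1 \<le> j"
    and hd: "hd p \<notin> blk g j" and la: "last p \<notin> blk g j" and ne: "set p \<inter> blk g j \<noteq> {}"
  shows "\<exists>a b. 0 < a \<and> a < b \<and> b + 1 < length p \<and> p!a \<in> blk g j \<and>
     {p!(a-1), p!(b+1)} = {(int g + 1, (j+1) div 2), (- int g - 1, (j+1) div 2)}"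
proof -
  have pne: "p \<noteq> []" and dis: "distinct p"
    and adj: "\<And>i. Suc i < length p \<Longrightarrow> H_adj l (p ! i) (p ! Suc i)"
    using path unfolding H_path_def by auto
  define I where "I = {i. i < length p \<and> p!i \<in> blk g j}"
  have fin: "finite I" unfolding I_def by auto
  have Ine: "I \<noteq> {}"
  proof -
    from ne obtain x where "x \<in> set p" "x \<in> blk g j" by auto
    then obtain i where "i < length p" "p!i = x" by (auto simp: in_set_conv_nth)
    then have "i \<in> I" using \<open>x \<in> blk g j\<close> unfolding I_def by auto
    then show ?thesis by auto
  qed
  define a where "a = Min I"
  define b where "b = Max I"
  have aI: "a \<in> I" and bI: "b \<in> I" using fin Ine unfolding a_def b_def by auto
  have ab: "a \<le> b" using fin Ine unfolding a_def b_def by simp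
  have a0: "a \<noteq> 0"
  proof
    assume "a = 0" then show False using aI hd pne unfolding I_def by (auto simp: hd_conv_nth)
  qed
  have bl: "b \<noteq> length p - 1" using bI la pne unfolding I_def by (auto simp: last_conv_nth)
  have bl2: "b + 1 < length p" using bI bl unfolding I_def by auto
  have pa1: "p!(a-1) \<notin> blk g j"
  proof
    assume "p!(a-1) \<in> blk g j"
    then have "a - 1 \<in> I" using aI unfolding I_def by auto
    then have "a \<le> a - 1" using fin unfolding a_def by simp
    then show False using a0 by simp
  qed
  have pb1: "p!(b+1) \<notin> blk g j"
  proof
    assume "p!(b+1) \<in> blk g j"
    then have "b + 1 \<in> I" using bl2 unfolding I_def by auto
    then have "b + 1 \<le> b" using fin unfolding b_def by simp
    then show False by simp
  qed
  have adja: "H_adj l (p!a) (p!(a-1))"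
    using adj[of "a-1"] a0 aI unfolding I_def by (auto intro: H_adj_sym)
  have adjb: "H_adj l (p!b) (p!(b+1))"
    using adj[of b] bl2 by auto
  have pa: "p!a \<in> blk g j" and pb: "p!b \<in> blk g j" using aI bI unfolding I_def by auto
  note EA = exit_blk[OF g pa pa1 adja]
  note EB = exit_blk[OF g pb pb1 adjb]
  have neq: "p!(a-1) \<noteq> p!(b+1)"
    using dis bl2 ab by (simp add: nth_eq_iff_index_eq)
  have TS: "(int g, j) \<noteq> (- int g, j)" using g by simp
  have set: "{p!(a-1), p!(b+1)} = {(int g + 1, (j+1) div 2), (- int g - 1, (j+1) div 2)}"
    using EA EB neq by auto
  have "a \<noteq> b" using EA EB neq TS by auto
  then show ?thesis using a0 ab bl2 pa set by (intro exI[of _ a] exI[of _ b]) auto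
qed

lemma blk_disj: "1 \<le> m \<Longrightarrow> blk g (2*m-1) \<inter> blk g (2*m) = {}"
  by (auto simp: blk_def)

lemma siblings:
  assumes path: "H_path l p" and g: "1 \<le> g" "g < l" "1 \<le> m"
    and hd: "hd p \<notin> blk g (2*m-1) \<union> blk g (2*m)" and la: "last p \<notin> blk g (2*m-1) \<union> blk g (2*m)"
  shows "set p \<inter> blk g (2*m-1) = {} \<or> set p \<inter> blk g (2*m) = {}"
proof (rule ccontr)
  assume "\<not> ?thesis"
  then have n1: "set p \<inter> blk g (2*m-1) \<noteq> {}" and n2: "set p \<inter> blk g (2*m) \<noteq> {}" by auto
  have dis: "distinct p" using path unfolding H_path_def by auto
  have e1: "(2*m-1+1) div 2 = m" "(2*m+1) div 2 = m" using g by auto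
  have j1: "1 \<le> 2*m-1" "1 \<le> 2*m" using g by auto
  obtain a b where A: "0 < a" "a < b" "b + 1 < length p" "p!a \<in> blk g (2*m-1)"
     "{p!(a-1), p!(b+1)} = {(int g + 1, m), (- int g - 1, m)}"
    using through[OF path g(1,2) j1(1) _ _ n1] g hd la e1 by auto
  obtain c d where C: "0 < c" "c < d" "d + 1 < length p" "p!c \<in> blk g (2*m)"
     "{p!(c-1), p!(d+1)} = {(int g + 1, m), (- int g - 1, m)}"
    using through[OF path g(1,2) j1(2) _ _ n2] g hd la e1 by auto
  have "{p!(a-1), p!(b+1)} = {p!(c-1), p!(d+1)}" using A C by simp
  then have "(p!(a-1) = p!(c-1)) \<or> (p!(a-1) = p!(d+1) \<and> p!(b+1) = p!(c-1))"
    by (auto simp: doubleton_eq_iff)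
  then show False
  proof
    assume "p!(a-1) = p!(c-1)"
    then have "a - 1 = c - 1" using dis A C by (simp add: nth_eq_iff_index_eq)
    then have "a = c" using A C by simp
    then show False using A C blk_disj[OF g(3)] by auto
  next
    assume "p!(a-1) = p!(d+1) \<and> p!(b+1) = p!(c-1)"
    then have "a - 1 = d + 1" "b + 1 = c - 1" using dis A C by (simp_all add: nth_eq_iff_index_eq)
    then show False using A C by simp
  qed
qed


lemma div_pow_Suc: "x div 2^(Suc n) = (x::nat) div 2^n div 2"
  by (metis div_mult2_eq power_Suc2)

lemma blk_Suc:
  assumes j: "1 \<le> j"
  shows "blk (Suc g) j \<subseteq> {(int (Suc g), j), (- int (Suc g), j)} \<union> blk g (2*j-1) \<union> blk g (2*j)"
proof
  fix x assume x: "x \<in> blk (Suc g) j"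
  obtain k i where xk: "x = (k,i)" by (cases x)
  have k: "\<bar>k\<bar> \<le> int (Suc g)" and i: "1 \<le> i" and q: "(i - 1) div 2 ^ (Suc g - nat \<bar>k\<bar>) = j - 1"
    using x xk by (auto simp: mem_blk)
  show "x \<in> {(int (Suc g), j), (- int (Suc g), j)} \<union> blk g (2*j-1) \<union> blk g (2*j)"
  proof (cases "\<bar>k\<bar> = int (Suc g)")
    case True
    then have "nat \<bar>k\<bar> = Suc g" by simp
    then have "i - 1 = j - 1" using q by simp
    then have "i = j" using i j by simp
    then show ?thesis using True xk by (cases "k \<ge> 0") auto
  next
    case False
    then have k2: "\<bar>k\<bar> \<le> int g" using k by simp
    then have e: "Suc g - nat \<bar>k\<bar> = Suc (g - nat \<bar>k\<bar>)" by simp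
    define r where "r = (i - 1) div 2 ^ (g - nat \<bar>k\<bar>)"
    have "r div 2 = j - 1" using q unfolding r_def e div_pow_Suc .
    then have "r = 2*j - 1 - 1 \<or> r = 2*j - 1" using j by auto
    then show ?thesis using k2 i xk unfolding r_def by (auto simp: mem_blk)
  qed
qed

lemma child_sub:
  assumes j: "1 \<le> j" and c: "c = 2*j-1 \<or> c = 2*j"
  shows "blk g c \<subseteq> blk (Suc g) j"
proof
  fix x assume x: "x \<in> blk g c"
  obtain k i where xk: "x = (k,i)" by (cases x)
  have k: "\<bar>k\<bar> \<le> int g" and i: "1 \<le> i" and q: "(i - 1) div 2 ^ (g - nat \<bar>k\<bar>) = c - 1"
    using x xk by (auto simp: mem_blk)
  have e: "Suc g - nat \<bar>k\<bar> = Suc (g - nat \<bar>k\<bar>)" using k by simp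
  have "(i - 1) div 2 ^ (Suc g - nat \<bar>k\<bar>) = (c - 1) div 2" unfolding e div_pow_Suc q ..
  also have "\<dots> = j - 1" using c j by auto
  finally show "x \<in> blk (Suc g) j" using k i xk by (simp add: mem_blk)
qed

lemma blk0: "1 \<le> j \<Longrightarrow> blk 0 j \<subseteq> {(0,j)}"
  by (auto simp: blk_def)

lemma top_blk: "set p \<subseteq> H_vert l \<Longrightarrow> set p \<subseteq> blk l 1"
proof
  fix x assume "set p \<subseteq> H_vert l" "x \<in> set p"
  then have x: "x \<in> H_vert l" by auto
  obtain k i where xk: "x = (k,i)" by (cases x)
  have "- int l \<le> k" "k \<le> int l" "1 \<le> i" "i \<le> 2 ^ (l - nat \<bar>k\<bar>)" using x xk by (auto simp: H_vert_def)
  moreover then have "(i - 1) div 2 ^ (l - nat \<bar>k\<bar>) = 0" by simp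
  ultimately show "x \<in> blk l 1" using xk by (simp add: mem_blk)
qed

definition bnd :: "nat \<Rightarrow> nat \<Rightarrow> nat" where
  "bnd h e = (if e = 0 then 2*h+2 else if e = 1 then h^2+3*h+2 else 2*h^2+2*h+2)"

lemma bnd_arith:
  assumes "e1 + e2 \<le> e" "e \<le> 2" "e \<noteq> 0" "c \<le> 2 + c1 + c2" "c1 \<le> bnd g e1" "c2 \<le> bnd g e2"
  shows "c \<le> bnd (Suc g) e"
proof -
  have "e1 = 0 \<or> e1 = 1 \<or> e1 = 2" "e2 = 0 \<or> e2 = 1 \<or> e2 = 2" "e = 1 \<or> e = 2" using assms by auto
  then show ?thesis using assms by (auto simp: bnd_def power2_eq_square)
qed

lemma bnd_le: "bnd h e \<le> 2*h^2+2*h+2"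
  by (auto simp: bnd_def power2_eq_square)


lemma card_E: "card ({a, b} \<inter> X) \<le> 2"
proof -
  have "card ({a, b} \<inter> X) \<le> card {a, b}" by (rule card_mono) auto
  also have "\<dots> \<le> 2" by (simp add: card_insert_if)
  finally show ?thesis .
qed

lemma main:
  assumes path: "H_path l p"
  shows "h \<le> l \<Longrightarrow> 1 \<le> j \<Longrightarrow> card (set p \<inter> blk h j) \<le> bnd h (card ({hd p, last p} \<inter> blk h j))"
proof (induction h arbitrary: j)
  case 0
  have "card (set p \<inter> blk 0 j) \<le> card {(0::int, j)}"
    by (rule card_mono) (use blk0[OF 0(2)] in auto)
  then show ?case by (simp add: bnd_def)
next
  case (Suc g)
  define E where "E = {hd p, last p}"
  define B where "B = blk (Suc g) j"
  define C1 where "C1 = blk g (2*j-1)"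
  define C2 where "C2 = blk g (2*j)"
  have j1: "1 \<le> 2*j-1" "1 \<le> 2*j" using Suc.prems by auto
  have IH1: "card (set p \<inter> C1) \<le> bnd g (card (E \<inter> C1))"
    using Suc.IH[OF _ j1(1)] Suc.prems unfolding C1_def E_def by simp
  have IH2: "card (set p \<inter> C2) \<le> bnd g (card (E \<inter> C2))"
    using Suc.IH[OF _ j1(2)] Suc.prems unfolding C2_def E_def by simp
  have dj: "C1 \<inter> C2 = {}" unfolding C1_def C2_def using blk_disj Suc.prems by auto
  have sub: "C1 \<subseteq> B" "C2 \<subseteq> B" unfolding C1_def C2_def B_def using child_sub Suc.prems by auto
  have "set p \<inter> B \<subseteq> {(int (Suc g), j), (- int (Suc g), j)} \<union> (set p \<inter> C1) \<union> (set p \<inter> C2)"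
    using blk_Suc[OF Suc.prems(2)] unfolding B_def C1_def C2_def by auto
  then have "card (set p \<inter> B) \<le> card ({(int (Suc g), j), (- int (Suc g), j)} \<union> (set p \<inter> C1) \<union> (set p \<inter> C2))"
    by (rule card_mono[rotated]) auto
  also have "\<dots> \<le> card {(int (Suc g), j), (- int (Suc g), j)} + card (set p \<inter> C1) + card (set p \<inter> C2)"
    by (meson add_le_mono card_Un_le le_refl order_trans)
  also have "\<dots> \<le> 2 + card (set p \<inter> C1) + card (set p \<inter> C2)"
    by (simp add: card_insert_if)
  finally have cB: "card (set p \<inter> B) \<le> 2 + card (set p \<inter> C1) + card (set p \<inter> C2)" .
  have "card (E \<inter> C1) + card (E \<inter> C2) = card ((E \<inter> C1) \<union> (E \<inter> C2))"
    by (rule card_Un_disjoint[symmetric]) (use dj in \<open>auto simp: E_def\<close>)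
  also have "\<dots> \<le> card (E \<inter> B)" by (rule card_mono) (use sub in \<open>auto simp: E_def\<close>)
  finally have eB: "card (E \<inter> C1) + card (E \<inter> C2) \<le> card (E \<inter> B)" .
  have e2: "card (E \<inter> B) \<le> 2" unfolding E_def by (rule card_E)
  show ?case
  proof (cases "card (E \<inter> B) = 0")
    case False
    have "card (set p \<inter> B) \<le> bnd (Suc g) (card (E \<inter> B))"
      by (rule bnd_arith[OF eB e2 False cB IH1 IH2])
    then show ?thesis unfolding B_def E_def .
  next
    case True
    then have z1: "card (E \<inter> C1) = 0" and z2: "card (E \<inter> C2) = 0" using eB by auto
    have fE: "finite E" unfolding E_def by simp
    have n1: "E \<inter> C1 = {}" using z1 fE by simp
    have n2: "E \<inter> C2 = {}" using z2 fE by simp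
    have "card (set p \<inter> B) \<le> 2 * Suc g + 2"
    proof (cases "g = 0")
      case True
      have "card (set p \<inter> C1) \<le> card {(0::int, 2*j-1)}"
        by (rule card_mono) (use blk0[OF j1(1)] True in \<open>auto simp: C1_def\<close>)
      moreover have "card (set p \<inter> C2) \<le> card {(0::int, 2*j)}"
        by (rule card_mono) (use blk0[OF j1(2)] True in \<open>auto simp: C2_def\<close>)
      ultimately show ?thesis using cB True by simp
    next
      case False
      have "set p \<inter> C1 = {} \<or> set p \<inter> C2 = {}"
        using siblings[OF path _ _ Suc.prems(2)] False Suc.prems(1) n1 n2
        unfolding C1_def C2_def E_def by auto
      then show ?thesis using cB IH1 IH2 z1 z2 by (auto simp: bnd_def)
    qed
    then show ?thesis using True unfolding B_def E_def by (simp add: bnd_def)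
  qed
qed

theorem theorem4:
  fixes l :: nat and p :: "(int \<times> nat) list"
  assumes "l \<ge> 1" and "H_path l p"
  shows "length p - 1 \<le> 2 * l ^ 2 + 4 * l + 7"
proof -
  have dis: "distinct p" and sv: "set p \<subseteq> H_vert l" using assms(2) unfolding H_path_def by auto
  have "set p \<inter> blk l 1 = set p" using top_blk[OF sv] by auto
  then have "card (set p) \<le> bnd l (card ({hd p, last p} \<inter> blk l 1))"
    using main[OF assms(2), of l 1] by simp
  also have "\<dots> \<le> 2*l^2+2*l+2" by (rule bnd_le)
  finally have "length p \<le> 2*l^2+2*l+2" using distinct_card[OF dis] by simp
  then show ?thesis by simp
qed

end
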